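(* Let $\mathcal C$ be a category, $I:\mathcal B\to\mathcal C$ the inclusion of a full subcategory with a left adjoint $S:\mathcal C\to\mathcal B$, with unit $\alpha:1_{\mathcal C}\to IS$ and counit $\beta:SI\xrightarrow{\cong}1_{\mathcal B}$, and $J:\mathcal D\to\mathcal C$ the inclusion of a full subcategory with a right adjoint $T:\mathcal C\to\mathcal D$, with unit $\delta:1_{\mathcal D}\xrightarrow{\cong}TJ$ and counit $\epsilon:JT\to1_{\mathcal C}$. Suppose that the natural transformations $IS\epsilon:ISJT\to IS$ and $JT\alpha:JT\to JTIS$ are isomorphisms. Then the endofunctor $JT:\mathcal C\to\mathcal C$ is left adjoint to the endofunctor $IS:\mathcal C\to\mathcal C$. *)

theory Defs
  imports Main
begin

text \<open>A category is given by a set of objects, a set of arrows, domain/codomain maps,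
identities and composition (Cmp C g f is "g after f").\<close>

record ('o, 'm) cat =
  Obj :: "'o set"
  Arr :: "'m set"
  Dom :: "'m \<Rightarrow> 'o"
  Cod :: "'m \<Rightarrow> 'o"
  Ide :: "'o \<Rightarrow> 'm"
  Cmp :: "'m \<Rightarrow> 'm \<Rightarrow> 'm"

definition hom :: "('o, 'm) cat \<Rightarrow> 'o \<Rightarrow> 'o \<Rightarrow> 'm set" where
  "hom C a b = {f \<in> Arr C. Dom C f = a \<and> Cod C f = b}"

definition is_category :: "('o, 'm) cat \<Rightarrow> bool" where
  "is_category C \<longleftrightarrow>
     (\<forall>f\<in>Arr C. Dom C f \<in> Obj C \<and> Cod C f \<in> Obj C) \<and>
     (\<forall>a\<in>Obj C. Ide C a \<in> hom C a a) \<and>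
     (\<forall>f\<in>Arr C. \<forall>g\<in>Arr C. Cod C f = Dom C g \<longrightarrow>
         Cmp C g f \<in> hom C (Dom C f) (Cod C g)) \<and>
     (\<forall>f\<in>Arr C. Cmp C (Ide C (Cod C f)) f = f \<and> Cmp C f (Ide C (Dom C f)) = f) \<and>
     (\<forall>f\<in>Arr C. \<forall>g\<in>Arr C. \<forall>h\<in>Arr C. Cod C f = Dom C g \<and> Cod C g = Dom C h \<longrightarrow>
         Cmp C h (Cmp C g f) = Cmp C (Cmp C h g) f)"

record ('o1, 'm1, 'o2, 'm2) ftor =
  FO :: "'o1 \<Rightarrow> 'o2"
  FA :: "'m1 \<Rightarrow> 'm2"

definition is_functor :: "('o1, 'm1) cat \<Rightarrow> ('o2, 'm2) cat \<Rightarrow> ('o1, 'm1, 'o2, 'm2) ftor \<Rightarrow> bool" where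
  "is_functor C D F \<longleftrightarrow> is_category C \<and> is_category D \<and>
     (\<forall>a\<in>Obj C. FO F a \<in> Obj D) \<and>
     (\<forall>f\<in>Arr C. FA F f \<in> hom D (FO F (Dom C f)) (FO F (Cod C f))) \<and>
     (\<forall>a\<in>Obj C. FA F (Ide C a) = Ide D (FO F a)) \<and>
     (\<forall>f\<in>Arr C. \<forall>g\<in>Arr C. Cod C f = Dom C g \<longrightarrow>
         FA F (Cmp C g f) = Cmp D (FA F g) (FA F f))"

definition id_ftor :: "('o, 'm, 'o, 'm) ftor" where
  "id_ftor = \<lparr>FO = id, FA = id\<rparr>"

definition comp_ftor :: "('o2, 'm2, 'o3, 'm3) ftor \<Rightarrow> ('o1, 'm1, 'o2, 'm2) ftor \<Rightarrow> ('o1, 'm1, 'o3, 'm3) ftor"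
  (infixl "\<circ>\<^sub>F" 55) where
  "G \<circ>\<^sub>F F = \<lparr>FO = FO G \<circ> FO F, FA = FA G \<circ> FA F\<rparr>"

definition is_nat_trans :: "('o1, 'm1) cat \<Rightarrow> ('o2, 'm2) cat \<Rightarrow> ('o1, 'm1, 'o2, 'm2) ftor \<Rightarrow>
    ('o1, 'm1, 'o2, 'm2) ftor \<Rightarrow> ('o1 \<Rightarrow> 'm2) \<Rightarrow> bool" where
  "is_nat_trans C D F G \<tau> \<longleftrightarrow> is_functor C D F \<and> is_functor C D G \<and>
     (\<forall>a\<in>Obj C. \<tau> a \<in> hom D (FO F a) (FO G a)) \<and>
     (\<forall>f\<in>Arr C. Cmp D (\<tau> (Cod C f)) (FA F f) = Cmp D (FA G f) (\<tau> (Dom C f)))"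

definition is_iso :: "('o, 'm) cat \<Rightarrow> 'm \<Rightarrow> bool" where
  "is_iso D f \<longleftrightarrow> f \<in> Arr D \<and>
     (\<exists>g\<in>hom D (Cod D f) (Dom D f). Cmp D g f = Ide D (Dom D f) \<and> Cmp D f g = Ide D (Cod D f))"

definition is_nat_iso :: "('o1, 'm1) cat \<Rightarrow> ('o2, 'm2) cat \<Rightarrow> ('o1, 'm1, 'o2, 'm2) ftor \<Rightarrow>
    ('o1, 'm1, 'o2, 'm2) ftor \<Rightarrow> ('o1 \<Rightarrow> 'm2) \<Rightarrow> bool" where
  "is_nat_iso C D F G \<tau> \<longleftrightarrow> is_nat_trans C D F G \<tau> \<and> (\<forall>a\<in>Obj C. is_iso D (\<tau> a))"

definition whisker_left :: "('o2, 'm2, 'o3, 'm3) ftor \<Rightarrow> ('o1 \<Rightarrow> 'm2) \<Rightarrow> ('o1 \<Rightarrow> 'm3)" where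
  "whisker_left H \<tau> = (\<lambda>a. FA H (\<tau> a))"

definition whisker_right :: "('o2 \<Rightarrow> 'm3) \<Rightarrow> ('o1, 'm1, 'o2, 'm2) ftor \<Rightarrow> ('o1 \<Rightarrow> 'm3)" where
  "whisker_right \<tau> K = (\<lambda>a. \<tau> (FO K a))"

definition is_adjunction :: "('o1, 'm1) cat \<Rightarrow> ('o2, 'm2) cat \<Rightarrow> ('o1, 'm1, 'o2, 'm2) ftor \<Rightarrow>
    ('o2, 'm2, 'o1, 'm1) ftor \<Rightarrow> ('o1 \<Rightarrow> 'm1) \<Rightarrow> ('o2 \<Rightarrow> 'm2) \<Rightarrow> bool" where
  "is_adjunction C D F G \<eta> \<epsilon> \<longleftrightarrow>
     is_functor C D F \<and> is_functor D C G \<and>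
     is_nat_trans C C id_ftor (G \<circ>\<^sub>F F) \<eta> \<and>
     is_nat_trans D D (F \<circ>\<^sub>F G) id_ftor \<epsilon> \<and>
     (\<forall>a\<in>Obj C. Cmp D (\<epsilon> (FO F a)) (FA F (\<eta> a)) = Ide D (FO F a)) \<and>
     (\<forall>b\<in>Obj D. Cmp C (FA G (\<epsilon> b)) (\<eta> (FO G b)) = Ide C (FO G b))"

definition full_subcat :: "('o, 'm) cat \<Rightarrow> 'o set \<Rightarrow> ('o, 'm) cat" where
  "full_subcat C B = \<lparr>Obj = B, Arr = {f \<in> Arr C. Dom C f \<in> B \<and> Cod C f \<in> B},
     Dom = Dom C, Cod = Cod C, Ide = Ide C, Cmp = Cmp C\<rparr>"

definition incl :: "('o, 'm, 'o, 'm) ftor" where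
  "incl = \<lparr>FO = id, FA = id\<rparr>"

end

theory Submission imports Defs begin

locale cat0 = fixes C :: "('o,'m) cat" assumes cat: "is_category C"
begin
lemma dom_obj[simp]: "f \<in> Arr C \<Longrightarrow> Dom C f \<in> Obj C" using cat unfolding is_category_def by blast
lemma cod_obj[simp]: "f \<in> Arr C \<Longrightarrow> Cod C f \<in> Obj C" using cat unfolding is_category_def by blast
lemma ide[simp]: "a \<in> Obj C \<Longrightarrow> Ide C a \<in> Arr C" "a \<in> Obj C \<Longrightarrow> Dom C (Ide C a) = a"
  "a \<in> Obj C \<Longrightarrow> Cod C (Ide C a) = a" using cat unfolding is_category_def hom_def by blast+
lemma comp[simp]: "f \<in> Arr C \<Longrightarrow> g \<in> Arr C \<Longrightarrow> Cod C f = Dom C g \<Longrightarrow> Cmp C g f \<in> Arr C"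
  "f \<in> Arr C \<Longrightarrow> g \<in> Arr C \<Longrightarrow> Cod C f = Dom C g \<Longrightarrow> Dom C (Cmp C g f) = Dom C f"
  "f \<in> Arr C \<Longrightarrow> g \<in> Arr C \<Longrightarrow> Cod C f = Dom C g \<Longrightarrow> Cod C (Cmp C g f) = Cod C g"
  using cat unfolding is_category_def hom_def by blast+
lemma idl[simp]: "f \<in> Arr C \<Longrightarrow> Cod C f = b \<Longrightarrow> Cmp C (Ide C b) f = f"
  using cat unfolding is_category_def by blast
lemma idr[simp]: "f \<in> Arr C \<Longrightarrow> Dom C f = b \<Longrightarrow> Cmp C f (Ide C b) = f"
  using cat unfolding is_category_def by blast
lemma assoc[simp]: "f \<in> Arr C \<Longrightarrow> g \<in> Arr C \<Longrightarrow> h \<in> Arr C \<Longrightarrow> Cod C f = Dom C g \<Longrightarrow> Cod C g = Dom C h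
  \<Longrightarrow> Cmp C (Cmp C h g) f = Cmp C h (Cmp C g f)"
  using cat unfolding is_category_def by metis

definition inv' where "inv' f = (SOME g. g \<in> Arr C \<and> Dom C g = Cod C f \<and> Cod C g = Dom C f \<and>
   Cmp C g f = Ide C (Dom C f) \<and> Cmp C f g = Ide C (Cod C f))"
lemma inv': assumes "is_iso C f"
  shows "inv' f \<in> Arr C \<and> Dom C (inv' f) = Cod C f \<and> Cod C (inv' f) = Dom C f \<and>
   Cmp C (inv' f) f = Ide C (Dom C f) \<and> Cmp C f (inv' f) = Ide C (Cod C f)"
proof -
  from assms obtain g where "g \<in> hom C (Cod C f) (Dom C f)" "Cmp C g f = Ide C (Dom C f)" "Cmp C f g = Ide C (Cod C f)"
    unfolding is_iso_def by blast
  hence "\<exists>g. g \<in> Arr C \<and> Dom C g = Cod C f \<and> Cod C g = Dom C f \<and>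
   Cmp C g f = Ide C (Dom C f) \<and> Cmp C f g = Ide C (Cod C f)" unfolding hom_def by blast
  thus ?thesis unfolding inv'_def by (rule someI_ex)
qed
end

locale setting = cat0 C for C :: "('o,'m) cat" +
  fixes B D :: "'o set" and S T :: "('o,'m,'o,'m) ftor" and \<alpha> \<beta> \<delta> \<epsilon> :: "'o \<Rightarrow> 'm"
  assumes BC: "B \<subseteq> Obj C" and DC: "D \<subseteq> Obj C"
  and s_obj: "c \<in> Obj C \<Longrightarrow> FO S c \<in> B"
  and sA_hom: "f \<in> Arr C \<Longrightarrow> FA S f \<in> hom C (FO S (Dom C f)) (FO S (Cod C f))"
  and sA_id: "c \<in> Obj C \<Longrightarrow> FA S (Ide C c) = Ide C (FO S c)"
  and sA_comp: "f \<in> Arr C \<Longrightarrow> g \<in> Arr C \<Longrightarrow> Cod C f = Dom C g \<Longrightarrow> FA S (Cmp C g f) = Cmp C (FA S g) (FA S f)"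
  and t_obj: "c \<in> Obj C \<Longrightarrow> FO T c \<in> D"
  and tA_hom: "f \<in> Arr C \<Longrightarrow> FA T f \<in> hom C (FO T (Dom C f)) (FO T (Cod C f))"
  and tA_id: "c \<in> Obj C \<Longrightarrow> FA T (Ide C c) = Ide C (FO T c)"
  and tA_comp: "f \<in> Arr C \<Longrightarrow> g \<in> Arr C \<Longrightarrow> Cod C f = Dom C g \<Longrightarrow> FA T (Cmp C g f) = Cmp C (FA T g) (FA T f)"
  and \<alpha>_hom: "c \<in> Obj C \<Longrightarrow> \<alpha> c \<in> hom C c (FO S c)"
  and \<alpha>_nat: "f \<in> Arr C \<Longrightarrow> Cmp C (\<alpha> (Cod C f)) f = Cmp C (FA S f) (\<alpha> (Dom C f))"
  and \<beta>_hom: "b \<in> B \<Longrightarrow> \<beta> b \<in> hom C (FO S b) b"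
  and \<beta>_nat: "f \<in> Arr C \<Longrightarrow> Dom C f \<in> B \<Longrightarrow> Cod C f \<in> B \<Longrightarrow> Cmp C (\<beta> (Cod C f)) (FA S f) = Cmp C f (\<beta> (Dom C f))"
  and tri\<alpha>1: "c \<in> Obj C \<Longrightarrow> Cmp C (\<beta> (FO S c)) (FA S (\<alpha> c)) = Ide C (FO S c)"
  and tri\<alpha>2: "b \<in> B \<Longrightarrow> Cmp C (\<beta> b) (\<alpha> b) = Ide C b"
  and \<delta>_hom: "d \<in> D \<Longrightarrow> \<delta> d \<in> hom C d (FO T d)"
  and \<delta>_nat: "f \<in> Arr C \<Longrightarrow> Dom C f \<in> D \<Longrightarrow> Cod C f \<in> D \<Longrightarrow> Cmp C (\<delta> (Cod C f)) f = Cmp C (FA T f) (\<delta> (Dom C f))"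
  and \<epsilon>_hom: "c \<in> Obj C \<Longrightarrow> \<epsilon> c \<in> hom C (FO T c) c"
  and \<epsilon>_nat: "f \<in> Arr C \<Longrightarrow> Cmp C (\<epsilon> (Cod C f)) (FA T f) = Cmp C f (\<epsilon> (Dom C f))"
  and tri\<delta>1: "d \<in> D \<Longrightarrow> Cmp C (\<epsilon> d) (\<delta> d) = Ide C d"
  and tri\<delta>2: "c \<in> Obj C \<Longrightarrow> Cmp C (FA T (\<epsilon> c)) (\<delta> (FO T c)) = Ide C (FO T c)"
  and iso1: "c \<in> Obj C \<Longrightarrow> is_iso C (FA S (\<epsilon> c))"
  and iso2: "c \<in> Obj C \<Longrightarrow> is_iso C (FA T (\<alpha> c))"
begin
abbreviation "s \<equiv> FO S"
abbreviation "sA \<equiv> FA S"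
abbreviation "t \<equiv> FO T"
abbreviation "tA \<equiv> FA T"
abbreviation cm (infixr "\<cdot>" 70) where "g \<cdot> f \<equiv> Cmp C g f"

lemma sO[simp]: "c \<in> Obj C \<Longrightarrow> s c \<in> Obj C" "c \<in> Obj C \<Longrightarrow> t c \<in> Obj C"
  using s_obj t_obj BC DC by auto
lemma sB[simp]: "c \<in> Obj C \<Longrightarrow> s c \<in> B" "c \<in> Obj C \<Longrightarrow> t c \<in> D" using s_obj t_obj by auto
lemma BO[simp]: "b \<in> B \<Longrightarrow> b \<in> Obj C" "b \<in> D \<Longrightarrow> b \<in> Obj C" using BC DC by auto
lemma sA[simp]: "f \<in> Arr C \<Longrightarrow> sA f \<in> Arr C" "f \<in> Arr C \<Longrightarrow> Dom C (sA f) = s (Dom C f)"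
   "f \<in> Arr C \<Longrightarrow> Cod C (sA f) = s (Cod C f)"
   "f \<in> Arr C \<Longrightarrow> tA f \<in> Arr C" "f \<in> Arr C \<Longrightarrow> Dom C (tA f) = t (Dom C f)"
   "f \<in> Arr C \<Longrightarrow> Cod C (tA f) = t (Cod C f)"
  using sA_hom tA_hom unfolding hom_def by auto
lemma nt[simp]: "c \<in> Obj C \<Longrightarrow> \<alpha> c \<in> Arr C" "c \<in> Obj C \<Longrightarrow> Dom C (\<alpha> c) = c" "c \<in> Obj C \<Longrightarrow> Cod C (\<alpha> c) = s c"
  "c \<in> Obj C \<Longrightarrow> \<epsilon> c \<in> Arr C" "c \<in> Obj C \<Longrightarrow> Dom C (\<epsilon> c) = t c" "c \<in> Obj C \<Longrightarrow> Cod C (\<epsilon> c) = c"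
  "b \<in> B \<Longrightarrow> \<beta> b \<in> Arr C" "b \<in> B \<Longrightarrow> Dom C (\<beta> b) = s b" "b \<in> B \<Longrightarrow> Cod C (\<beta> b) = b"
  "d \<in> D \<Longrightarrow> \<delta> d \<in> Arr C" "d \<in> D \<Longrightarrow> Dom C (\<delta> d) = d" "d \<in> D \<Longrightarrow> Cod C (\<delta> d) = t d"
  using \<alpha>_hom \<epsilon>_hom \<beta>_hom \<delta>_hom unfolding hom_def by auto

definition "p c = inv' (tA (\<alpha> c))"
definition "q c = inv' (sA (\<epsilon> c))"
lemma p[simp]: "c \<in> Obj C \<Longrightarrow> p c \<in> Arr C" "c \<in> Obj C \<Longrightarrow> Dom C (p c) = t (s c)"
  "c \<in> Obj C \<Longrightarrow> Cod C (p c) = t c" "c \<in> Obj C \<Longrightarrow> p c \<cdot> tA (\<alpha> c) = Ide C (t c)"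
  "c \<in> Obj C \<Longrightarrow> tA (\<alpha> c) \<cdot> p c = Ide C (t (s c))"
  using inv'[OF iso2, of c] unfolding p_def by auto
lemma q[simp]: "c \<in> Obj C \<Longrightarrow> q c \<in> Arr C" "c \<in> Obj C \<Longrightarrow> Dom C (q c) = s c"
  "c \<in> Obj C \<Longrightarrow> Cod C (q c) = s (t c)" "c \<in> Obj C \<Longrightarrow> q c \<cdot> sA (\<epsilon> c) = Ide C (s (t c))"
  "c \<in> Obj C \<Longrightarrow> sA (\<epsilon> c) \<cdot> q c = Ide C (s c)"
  using inv'[OF iso1, of c] unfolding q_def by auto

lemma \<alpha>\<beta>: "b \<in> B \<Longrightarrow> \<alpha> b \<cdot> \<beta> b = Ide C (s b)"
  using \<beta>_nat[of "\<alpha> b"] tri\<alpha>1[of b] by simp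
lemma \<delta>\<epsilon>: "d \<in> D \<Longrightarrow> \<delta> d \<cdot> \<epsilon> d = Ide C (t d)"
  using \<delta>_nat[of "\<epsilon> d"] tri\<delta>2[of d] by simp

lemma sA\<alpha>: assumes "c \<in> Obj C" shows "sA (\<alpha> c) = \<alpha> (s c)"
proof -
  have "sA (\<alpha> c) = (\<alpha> (s c) \<cdot> \<beta> (s c)) \<cdot> sA (\<alpha> c)" using assms \<alpha>\<beta>[of "s c"] by simp
  also have "\<dots> = \<alpha> (s c)" using assms tri\<alpha>1[of c] by simp
  finally show ?thesis .
qed
lemma tA\<epsilon>: assumes "c \<in> Obj C" shows "tA (\<epsilon> c) = \<epsilon> (t c)"
proof -
  have "tA (\<epsilon> c) = tA (\<epsilon> c) \<cdot> (\<delta> (t c) \<cdot> \<epsilon> (t c))" using assms \<delta>\<epsilon>[of "t c"] by simp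
  also have "\<dots> = \<epsilon> (t c)" using assms tri\<delta>2[of c] by (simp flip: assoc)
  finally show ?thesis .
qed

lemma qnat: assumes f: "f \<in> Arr C" shows "q (Cod C f) \<cdot> sA f = sA (tA f) \<cdot> q (Dom C f)"
proof -
  let ?a = "Dom C f" and ?b = "Cod C f"
  have "q ?b \<cdot> sA f = q ?b \<cdot> sA f \<cdot> sA (\<epsilon> ?a) \<cdot> q ?a" using f by (simp flip: assoc)
  also have "\<dots> = q ?b \<cdot> sA (f \<cdot> \<epsilon> ?a) \<cdot> q ?a" using f by (simp add: sA_comp)
  also have "\<dots> = q ?b \<cdot> sA (\<epsilon> ?b \<cdot> tA f) \<cdot> q ?a" using f by (simp add: \<epsilon>_nat)
  also have "\<dots> = sA (tA f) \<cdot> q ?a" using f by (simp add: sA_comp flip: assoc)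
  finally show ?thesis .
qed
lemma pnat: assumes f: "f \<in> Arr C" shows "p (Cod C f) \<cdot> tA (sA f) = tA f \<cdot> p (Dom C f)"
proof -
  let ?a = "Dom C f" and ?b = "Cod C f"
  have "p ?b \<cdot> tA (sA f) = p ?b \<cdot> tA (sA f) \<cdot> tA (\<alpha> ?a) \<cdot> p ?a" using f by (simp flip: assoc)
  also have "\<dots> = p ?b \<cdot> tA (sA f \<cdot> \<alpha> ?a) \<cdot> p ?a" using f by (simp add: tA_comp)
  also have "\<dots> = p ?b \<cdot> tA (\<alpha> ?b \<cdot> f) \<cdot> p ?a" using f by (simp add: \<alpha>_nat)
  also have "\<dots> = tA f \<cdot> p ?a" using f by (simp add: tA_comp flip: assoc)
  finally show ?thesis .
qed

definition "eta c = q c \<cdot> \<alpha> c"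
definition "eps c = \<epsilon> c \<cdot> p c"

lemma eta_nat: assumes f: "f \<in> Arr C" shows "eta (Cod C f) \<cdot> f = sA (tA f) \<cdot> eta (Dom C f)"
proof -
  have "eta (Cod C f) \<cdot> f = q (Cod C f) \<cdot> sA f \<cdot> \<alpha> (Dom C f)" using f by (simp add: eta_def \<alpha>_nat)
  also have "\<dots> = (q (Cod C f) \<cdot> sA f) \<cdot> \<alpha> (Dom C f)" using f by simp
  also have "\<dots> = sA (tA f) \<cdot> eta (Dom C f)" using f by (simp add: qnat eta_def)
  finally show ?thesis .
qed
lemma eps_nat: assumes f: "f \<in> Arr C" shows "eps (Cod C f) \<cdot> tA (sA f) = f \<cdot> eps (Dom C f)"
proof -
  have "eps (Cod C f) \<cdot> tA (sA f) = \<epsilon> (Cod C f) \<cdot> (p (Cod C f) \<cdot> tA (sA f))" using f by (simp add: eps_def)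
  also have "\<dots> = (\<epsilon> (Cod C f) \<cdot> tA f) \<cdot> p (Dom C f)" using f by (simp add: pnat)
  also have "\<dots> = f \<cdot> eps (Dom C f)" using f by (simp add: \<epsilon>_nat eps_def)
  finally show ?thesis .
qed

lemma tri1: assumes c: "c \<in> Obj C" shows "eps (t c) \<cdot> tA (eta c) = Ide C (t c)"
proof -
  define W where "W = p (t c) \<cdot> tA (q c) \<cdot> tA (\<alpha> c)"
  have W: "W \<in> Arr C" "Dom C W = t c" "Cod C W = t (t c)" using c by (simp_all add: W_def)
  have n: "sA (\<epsilon> c) \<cdot> \<alpha> (t c) = \<alpha> c \<cdot> \<epsilon> c" using \<alpha>_nat[of "\<epsilon> c"] c by simp
  have n2: "tA (sA (\<epsilon> c)) \<cdot> tA (\<alpha> (t c)) = tA (\<alpha> c) \<cdot> \<epsilon> (t c)"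
    using c by (simp add: tA_comp[symmetric] n tA\<epsilon>[symmetric])
  have qq: "tA (q c) \<cdot> tA (sA (\<epsilon> c)) = Ide C (t (s (t c)))"
    using c by (simp add: tA_comp[symmetric] tA_id)
  have "W \<cdot> \<epsilon> (t c) = p (t c) \<cdot> tA (q c) \<cdot> tA (\<alpha> c) \<cdot> \<epsilon> (t c)" using c by (simp add: W_def)
  also have "\<dots> = p (t c) \<cdot> (tA (q c) \<cdot> tA (sA (\<epsilon> c))) \<cdot> tA (\<alpha> (t c))" using c by (simp add: n2[symmetric])
  also have "\<dots> = Ide C (t (t c))" using c by (simp add: qq)
  finally have We: "W \<cdot> \<epsilon> (t c) = Ide C (t (t c))" .
  have "W = (W \<cdot> \<epsilon> (t c)) \<cdot> \<delta> (t c)" using c W by (simp add: tri\<delta>1)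
  hence Wd: "W = \<delta> (t c)" using c by (simp add: We)
  have "eps (t c) \<cdot> tA (eta c) = \<epsilon> (t c) \<cdot> W" using c by (simp add: eps_def eta_def W_def tA_comp)
  thus ?thesis using c by (simp add: Wd tri\<delta>1)
qed

lemma tri2: assumes c: "c \<in> Obj C" shows "sA (eps c) \<cdot> eta (s c) = Ide C (s c)"
proof -
  define V where "V = sA (\<epsilon> c) \<cdot> sA (p c) \<cdot> q (s c)"
  have V: "V \<in> Arr C" "Dom C V = s (s c)" "Cod C V = s c" using c by (simp_all add: V_def)
  have n: "\<alpha> c \<cdot> \<epsilon> c = \<epsilon> (s c) \<cdot> tA (\<alpha> c)" using \<epsilon>_nat[of "\<alpha> c"] c by simp
  have n2: "\<alpha> (s c) \<cdot> sA (\<epsilon> c) = sA (\<epsilon> (s c)) \<cdot> sA (tA (\<alpha> c))"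
    using c by (simp add: sA_comp[symmetric] n sA\<alpha>[symmetric])
  have pp: "sA (tA (\<alpha> c)) \<cdot> sA (p c) = Ide C (s (t (s c)))"
    using c by (simp add: sA_comp[symmetric] sA_id)
  have "\<alpha> (s c) \<cdot> V = (\<alpha> (s c) \<cdot> sA (\<epsilon> c)) \<cdot> sA (p c) \<cdot> q (s c)" using c by (simp add: V_def)
  also have "\<dots> = sA (\<epsilon> (s c)) \<cdot> (sA (tA (\<alpha> c)) \<cdot> sA (p c)) \<cdot> q (s c)" using c by (simp add: n2)
  also have "\<dots> = Ide C (s (s c))" using c by (simp add: pp)
  finally have Va: "\<alpha> (s c) \<cdot> V = Ide C (s (s c))" .
  have "V = \<beta> (s c) \<cdot> (\<alpha> (s c) \<cdot> V)" using c V by (simp add: tri\<alpha>2 flip: assoc)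
  hence Vb: "V = \<beta> (s c)" using c by (simp add: Va)
  have "sA (eps c) \<cdot> eta (s c) = V \<cdot> \<alpha> (s c)" using c by (simp add: eps_def eta_def V_def sA_comp)
  thus ?thesis using c by (simp add: Vb tri\<alpha>2)
qed

lemma FT[simp]: "FO (incl \<circ>\<^sub>F T) = t" "FA (incl \<circ>\<^sub>F T) = tA" "FO (incl \<circ>\<^sub>F S) = s" "FA (incl \<circ>\<^sub>F S) = sA"
  "FO ((incl \<circ>\<^sub>F S) \<circ>\<^sub>F (incl \<circ>\<^sub>F T)) = s \<circ> t" "FA ((incl \<circ>\<^sub>F S) \<circ>\<^sub>F (incl \<circ>\<^sub>F T)) = sA \<circ> tA"
  "FO ((incl \<circ>\<^sub>F T) \<circ>\<^sub>F (incl \<circ>\<^sub>F S)) = t \<circ> s" "FA ((incl \<circ>\<^sub>F T) \<circ>\<^sub>F (incl \<circ>\<^sub>F S)) = tA \<circ> sA"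
  "FO (id_ftor :: ('o,'m,'o,'m) ftor) = id" "FA (id_ftor :: ('o,'m,'o,'m) ftor) = id"
  by (auto simp: comp_ftor_def incl_def id_ftor_def)

lemma fL: "is_functor C C (incl \<circ>\<^sub>F T)"
  unfolding is_functor_def using cat by (auto simp: hom_def tA_id tA_comp)
lemma fR: "is_functor C C (incl \<circ>\<^sub>F S)"
  unfolding is_functor_def using cat by (auto simp: hom_def sA_id sA_comp)
lemma fid: "is_functor C C (id_ftor :: ('o,'m,'o,'m) ftor)"
  unfolding is_functor_def using cat by (auto simp: hom_def)
lemma fRL: "is_functor C C ((incl \<circ>\<^sub>F S) \<circ>\<^sub>F (incl \<circ>\<^sub>F T))"
  unfolding is_functor_def using cat by (auto simp: hom_def sA_id sA_comp tA_id tA_comp)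
lemma fLR: "is_functor C C ((incl \<circ>\<^sub>F T) \<circ>\<^sub>F (incl \<circ>\<^sub>F S))"
  unfolding is_functor_def using cat by (auto simp: hom_def sA_id sA_comp tA_id tA_comp)

lemma adj: "is_adjunction C C (incl \<circ>\<^sub>F T) (incl \<circ>\<^sub>F S) eta eps"
  unfolding is_adjunction_def is_nat_trans_def
  using fL fR fid fRL fLR tri1 tri2 eta_nat eps_nat
  by (auto simp: hom_def eta_def eps_def)
end

theorem theoremA3:
  fixes C :: "('o, 'm) cat"
    and B D :: "'o set"
    and S T :: "('o, 'm, 'o, 'm) ftor"
    and \<alpha> \<beta> \<delta> \<epsilon> :: "'o \<Rightarrow> 'm"
  assumes "is_category C"
    and "B \<subseteq> Obj C"
    and "D \<subseteq> Obj C"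
    and "is_adjunction C (full_subcat C B) S incl \<alpha> \<beta>"
    and "is_adjunction (full_subcat C D) C incl T \<delta> \<epsilon>"
    and "is_nat_iso C C (incl \<circ>\<^sub>F S \<circ>\<^sub>F incl \<circ>\<^sub>F T) (incl \<circ>\<^sub>F S)
           (whisker_left (incl \<circ>\<^sub>F S) \<epsilon>)"
    and "is_nat_iso C C (incl \<circ>\<^sub>F T) (incl \<circ>\<^sub>F T \<circ>\<^sub>F incl \<circ>\<^sub>F S)
           (whisker_left (incl \<circ>\<^sub>F T) \<alpha>)"
  shows "\<exists>\<eta> \<epsilon>'. is_adjunction C C (incl \<circ>\<^sub>F T) (incl \<circ>\<^sub>F S) \<eta> \<epsilon>'"
proof -
  have incl[simp]: "FO incl = id" "FA incl = id" by (simp_all add: incl_def)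
  have fs[simp]: "Obj (full_subcat C X) = X" "Arr (full_subcat C X) = {f \<in> Arr C. Dom C f \<in> X \<and> Cod C f \<in> X}"
    "Dom (full_subcat C X) = Dom C" "Cod (full_subcat C X) = Cod C" "Ide (full_subcat C X) = Ide C"
    "Cmp (full_subcat C X) = Cmp C" for X by (simp_all add: full_subcat_def)
  have wl[simp]: "whisker_left F \<tau> = (\<lambda>a. FA F (\<tau> a))" for F :: "('o,'m,'o,'m) ftor" and \<tau> :: "'o \<Rightarrow> 'm"
    by (simp add: whisker_left_def fun_eq_iff)
  have cf[simp]: "FO (F \<circ>\<^sub>F G) = FO F \<circ> FO G" "FA (F \<circ>\<^sub>F G) = FA F \<circ> FA G"
    for F G :: "('o,'m,'o,'m) ftor" by (simp_all add: comp_ftor_def)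
  have idf[simp]: "FO (id_ftor :: ('o,'m,'o,'m) ftor) = id" "FA (id_ftor :: ('o,'m,'o,'m) ftor) = id"
    by (simp_all add: id_ftor_def)
  note A = assms(4)[unfolded is_adjunction_def is_nat_trans_def is_functor_def]
  note A2 = assms(5)[unfolded is_adjunction_def is_nat_trans_def is_functor_def]
  note I1 = assms(6)[unfolded is_nat_iso_def]
  note I2 = assms(7)[unfolded is_nat_iso_def]
  interpret setting C B D S T \<alpha> \<beta> \<delta> \<epsilon>
  proof (unfold_locales)
    show "is_category C" by fact
    show "B \<subseteq> Obj C" "D \<subseteq> Obj C" by fact+
  next
    fix c assume "c \<in> Obj C"
    thus "FO S c \<in> B" "FA S (Ide C c) = Ide C (FO S c)" "FO T c \<in> D" "FA T (Ide C c) = Ide C (FO T c)"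
      "\<alpha> c \<in> hom C c (FO S c)" "\<epsilon> c \<in> hom C (FO T c) c"
      "Cmp C (\<beta> (FO S c)) (FA S (\<alpha> c)) = Ide C (FO S c)"
      "Cmp C (FA T (\<epsilon> c)) (\<delta> (FO T c)) = Ide C (FO T c)"
      "is_iso C (FA S (\<epsilon> c))" "is_iso C (FA T (\<alpha> c))"
      using A A2 I1 I2 by (auto simp: hom_def)
  next
    fix f assume f: "f \<in> Arr C"
    thus "FA S f \<in> hom C (FO S (Dom C f)) (FO S (Cod C f))"
      "FA T f \<in> hom C (FO T (Dom C f)) (FO T (Cod C f))"
      "Cmp C (\<alpha> (Cod C f)) f = Cmp C (FA S f) (\<alpha> (Dom C f))"
      "Cmp C (\<epsilon> (Cod C f)) (FA T f) = Cmp C f (\<epsilon> (Dom C f))"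
      using A A2 by (auto simp: hom_def)
    fix g assume "g \<in> Arr C" "Cod C f = Dom C g"
    thus "FA S (Cmp C g f) = Cmp C (FA S g) (FA S f)" "FA T (Cmp C g f) = Cmp C (FA T g) (FA T f)"
      using A A2 f by auto
  next
    fix b assume "b \<in> B"
    thus "\<beta> b \<in> hom C (FO S b) b" "Cmp C (\<beta> b) (\<alpha> b) = Ide C b" using A by (auto simp: hom_def)
  next
    fix d assume "d \<in> D"
    thus "\<delta> d \<in> hom C d (FO T d)" "Cmp C (\<epsilon> d) (\<delta> d) = Ide C d" using A2 by (auto simp: hom_def)
  next
    fix f assume "f \<in> Arr C" "Dom C f \<in> B" "Cod C f \<in> B"
    thus "Cmp C (\<beta> (Cod C f)) (FA S f) = Cmp C f (\<beta> (Dom C f))" using A by auto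
  next
    fix f assume "f \<in> Arr C" "Dom C f \<in> D" "Cod C f \<in> D"
    thus "Cmp C (\<delta> (Cod C f)) f = Cmp C (FA T f) (\<delta> (Dom C f))" using A2 by auto
  qed
  show ?thesis using adj by blast
qed
end
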